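(* Let $G=(V,E)$ be a finite, simple, connected graph which is reflective and locally connected. Then $G$ is distance transitive.
   Context: $d$ is the combinatorial distance. Locally connected: for every vertex $v$ the subgraph induced on the neighbors of $v$ is connected. Distance transitive: for all $x,y,x',y'\in V$ with $d(x,y)=d(x',y')$ there is a graph automorphism $\psi$ with $\psi(x)=x'$ and $\psi(y)=y'$. For adjacent $x\sim y$ let $V_x^y=\{v: d(v,x)<d(v,y)\}$, $V^{xy}=\{v:d(v,x)=d(v,y)\}$. A reflection from $x$ to $y$ is a graph automorphism $\phi$ with $\phi\circ\phi=\mathrm{id}$, $\phi(x)=y$, such that the edges between $V_x^y$ and $V_y^x$ are exactly $\{\{x',\phi(x')\}:x'\in V_x^y\}$ and $\phi$ fixes $V^{xy}$ pointwise. A graph is reflective if every edge admits a reflection. *)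

theory Defs
  imports Main
begin

definition simple_graph :: "'a set \<Rightarrow> ('a \<Rightarrow> 'a \<Rightarrow> bool) \<Rightarrow> bool" where
  "simple_graph V E \<longleftrightarrow>
     (\<forall>u w. E u w \<longrightarrow> u \<in> V \<and> w \<in> V) \<and>
     (\<forall>u w. E u w \<longrightarrow> E w u) \<and> (\<forall>u. \<not> E u u)"

text \<open>A vertex set S induces a connected subgraph: any two vertices of S are
joined by a walk inside S (the empty set counts as connected).\<close>
definition induced_connected :: "('a \<Rightarrow> 'a \<Rightarrow> bool) \<Rightarrow> 'a set \<Rightarrow> bool" where
  "induced_connected E S \<longleftrightarrow>
     (\<forall>u\<in>S. \<forall>w\<in>S. (\<lambda>a b. a \<in> S \<and> b \<in> S \<and> E a b)\<^sup>*\<^sup>* u w)"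

definition connected_graph :: "'a set \<Rightarrow> ('a \<Rightarrow> 'a \<Rightarrow> bool) \<Rightarrow> bool" where
  "connected_graph V E \<longleftrightarrow> V \<noteq> {} \<and> induced_connected E V"

definition locally_connected :: "'a set \<Rightarrow> ('a \<Rightarrow> 'a \<Rightarrow> bool) \<Rightarrow> bool" where
  "locally_connected V E \<longleftrightarrow> (\<forall>v\<in>V. induced_connected E {u. E v u})"

definition gdist :: "('a \<Rightarrow> 'a \<Rightarrow> bool) \<Rightarrow> 'a \<Rightarrow> 'a \<Rightarrow> nat" where
  "gdist E x y = (LEAST n. (E ^^ n) x y)"

definition graph_aut :: "'a set \<Rightarrow> ('a \<Rightarrow> 'a \<Rightarrow> bool) \<Rightarrow> ('a \<Rightarrow> 'a) \<Rightarrow> bool" where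
  "graph_aut V E \<psi> \<longleftrightarrow> bij_betw \<psi> V V \<and> (\<forall>u\<in>V. \<forall>w\<in>V. E (\<psi> u) (\<psi> w) \<longleftrightarrow> E u w)"

definition distance_transitive :: "'a set \<Rightarrow> ('a \<Rightarrow> 'a \<Rightarrow> bool) \<Rightarrow> bool" where
  "distance_transitive V E \<longleftrightarrow>
     (\<forall>x\<in>V. \<forall>y\<in>V. \<forall>x'\<in>V. \<forall>y'\<in>V. gdist E x y = gdist E x' y' \<longrightarrow>
        (\<exists>\<psi>. graph_aut V E \<psi> \<and> \<psi> x = x' \<and> \<psi> y = y'))"

definition closer :: "'a set \<Rightarrow> ('a \<Rightarrow> 'a \<Rightarrow> bool) \<Rightarrow> 'a \<Rightarrow> 'a \<Rightarrow> 'a set" where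
  "closer V E x y = {v\<in>V. gdist E v x < gdist E v y}"

definition equidist :: "'a set \<Rightarrow> ('a \<Rightarrow> 'a \<Rightarrow> bool) \<Rightarrow> 'a \<Rightarrow> 'a \<Rightarrow> 'a set" where
  "equidist V E x y = {v\<in>V. gdist E v x = gdist E v y}"

definition is_reflection ::
  "'a set \<Rightarrow> ('a \<Rightarrow> 'a \<Rightarrow> bool) \<Rightarrow> 'a \<Rightarrow> 'a \<Rightarrow> ('a \<Rightarrow> 'a) \<Rightarrow> bool" where
  "is_reflection V E x y \<phi> \<longleftrightarrow>
     graph_aut V E \<phi> \<and> (\<forall>v\<in>V. \<phi> (\<phi> v) = v) \<and> \<phi> x = y \<and>
     {{u, w} | u w. u \<in> closer V E x y \<and> w \<in> closer V E y x \<and> E u w}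
       = {{x', \<phi> x'} | x'. x' \<in> closer V E x y} \<and>
     (\<forall>v\<in>equidist V E x y. \<phi> v = v)"

definition reflective :: "'a set \<Rightarrow> ('a \<Rightarrow> 'a \<Rightarrow> bool) \<Rightarrow> bool" where
  "reflective V E \<longleftrightarrow> (\<forall>x y. E x y \<longrightarrow> (\<exists>\<phi>. is_reflection V E x y \<phi>))"

end

theory Submission
  imports Defs
begin


locale rg =
  fixes V :: "'a set" and E :: "'a \<Rightarrow> 'a \<Rightarrow> bool"
  assumes sg: "simple_graph V E" and cg: "connected_graph V E"
    and rf: "reflective V E" and lc: "locally_connected V E"
begin

abbreviation "d \<equiv> gdist E"
abbreviation "aut \<equiv> graph_aut V E"

lemma eV: "E u w \<Longrightarrow> u \<in> V \<and> w \<in> V" using sg unfolding simple_graph_def by blast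
lemma esym: "E u w \<Longrightarrow> E w u" using sg unfolding simple_graph_def by blast
lemma eirr: "\<not> E u u" using sg unfolding simple_graph_def by blast

lemma reach: assumes "u \<in> V" "w \<in> V" shows "\<exists>n. (E ^^ n) u w"
proof -
  have "(\<lambda>a b. a \<in> V \<and> b \<in> V \<and> E a b)\<^sup>*\<^sup>* u w"
    using cg assms unfolding connected_graph_def induced_connected_def by blast
  moreover have "(\<lambda>a b. a \<in> V \<and> b \<in> V \<and> E a b) \<le> E" by auto
  ultimately have "E\<^sup>*\<^sup>* u w" using rtranclp_mono by blast
  thus ?thesis by (rule rtranclp_imp_relpowp)
qed

lemma dist_path: "u \<in> V \<Longrightarrow> w \<in> V \<Longrightarrow> (E ^^ (d u w)) u w"
  unfolding gdist_def using reach by (meson LeastI_ex)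

lemma dist_le: "(E ^^ n) u w \<Longrightarrow> d u w \<le> n"
  unfolding gdist_def by (rule Least_le)

lemma pow_sym: "(E ^^ n) u w \<Longrightarrow> (E ^^ n) w u"
proof (induction n arbitrary: u w)
  case 0 thus ?case by simp
next
  case (Suc n)
  from Suc.prems obtain c where "(E ^^ n) u c" "E c w" by auto
  thus ?case using Suc.IH esym relpowp_Suc_I2 by metis
qed

lemma dist_sym: "d u w = d w u"
proof -
  have "\<And>n. (E ^^ n) u w = (E ^^ n) w u" using pow_sym by blast
  thus ?thesis unfolding gdist_def by simp
qed

lemma tri: assumes "u \<in> V" "v \<in> V" "w \<in> V" shows "d u w \<le> d u v + d v w"
proof -
  have "(E ^^ (d u v + d v w)) u w"
    using dist_path[OF assms(1,2)] dist_path[OF assms(2,3)] unfolding relpowp_add by auto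
  thus ?thesis by (rule dist_le)
qed

lemma d_refl[simp]: "d u u = 0"
proof -
  have "(E ^^ 0) u u" by simp
  thus ?thesis using dist_le by fastforce
qed

lemma d0: "u \<in> V \<Longrightarrow> w \<in> V \<Longrightarrow> d u w = 0 \<Longrightarrow> u = w"
  using dist_path by fastforce

lemma d1: "E u w \<Longrightarrow> d u w = 1"
proof -
  assume e: "E u w"
  have "(E ^^ 1) u w" using e by (simp only: relpowp_1)
  hence "d u w \<le> 1" by (rule dist_le)
  moreover have "d u w \<noteq> 0" using d0 eV[OF e] e eirr by metis
  ultimately show ?thesis by simp
qed

lemma d1E: "u \<in> V \<Longrightarrow> w \<in> V \<Longrightarrow> d u w = 1 \<Longrightarrow> E u w"
  using dist_path[of u w] by (simp only: relpowp_1)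

lemma dstep: assumes "u \<in> V" "w \<in> V" "d u w = Suc n" shows "\<exists>v. E u v \<and> d v w = n"
proof -
  from dist_path[OF assms(1,2)] assms(3) obtain v where v: "E u v" "(E ^^ n) v w"
    using relpowp_Suc_D2 by metis
  have "d v w \<le> n" using v(2) by (rule dist_le)
  moreover have "d u w \<le> d u v + d v w" using tri assms eV v(1) by blast
  moreover have "d u v = 1" using d1 v(1) .
  ultimately show ?thesis using v(1) assms(3) by (intro exI[of _ v]) linarith
qed

lemma adj_le: assumes "E u v" "x \<in> V" shows "d x v \<le> d x u + 1"
proof -
  have "d x v \<le> d x u + d u v" using tri[of x u v] eV assms by blast
  thus ?thesis using d1[OF assms(1)] by simp
qed

lemma aut_V: "aut \<psi> \<Longrightarrow> u \<in> V \<Longrightarrow> \<psi> u \<in> V"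
  unfolding graph_aut_def using bij_betw_apply[of \<psi> V V u] by (simp only:)
lemma aut_E: assumes "aut \<psi>" "u \<in> V" "w \<in> V" shows "E (\<psi> u) (\<psi> w) = E u w"
proof -
  have "\<forall>u\<in>V. \<forall>w\<in>V. E (\<psi> u) (\<psi> w) = E u w" using assms(1) unfolding graph_aut_def by (rule conjunct2)
  thus ?thesis using assms(2,3) by simp
qed

lemma aut_pow1: "aut \<psi> \<Longrightarrow> u \<in> V \<Longrightarrow> (E ^^ n) u w \<Longrightarrow> (E ^^ n) (\<psi> u) (\<psi> w)"
proof (induction n arbitrary: u)
  case 0 thus ?case by simp
next
  case (Suc n)
  from Suc.prems(3) obtain c where c: "E u c" "(E ^^ n) c w" using relpowp_Suc_D2 by metis
  have cV: "c \<in> V" using eV c(1) by blast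
  have "E (\<psi> u) (\<psi> c)" using aut_E[OF Suc.prems(1,2) cV] c(1) by simp
  thus ?case using Suc.IH[OF Suc.prems(1) cV c(2)] relpowp_Suc_I2 by metis
qed

lemma aut_pow2: "aut \<psi> \<Longrightarrow> u \<in> V \<Longrightarrow> w \<in> V \<Longrightarrow> (E ^^ n) (\<psi> u) (\<psi> w) \<Longrightarrow> (E ^^ n) u w"
proof (induction n arbitrary: u)
  case 0
  hence "\<psi> u = \<psi> w" by simp
  moreover have "inj_on \<psi> V" using 0(1) unfolding graph_aut_def bij_betw_def by blast
  ultimately show ?case using 0 by (simp add: inj_on_def)
next
  case (Suc n)
  from Suc.prems(4) obtain c where c: "E (\<psi> u) c" "(E ^^ n) c (\<psi> w)" using relpowp_Suc_D2 by metis
  have cV: "c \<in> V" using eV c(1) by blast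
  have "\<psi> ` V = V" using Suc.prems(1) unfolding graph_aut_def bij_betw_def by blast
  then obtain c' where c': "c' \<in> V" "c = \<psi> c'" using cV by blast
  have "E u c'" using aut_E[OF Suc.prems(1,2) c'(1)] c c' by simp
  thus ?case using Suc.IH[OF Suc.prems(1) c'(1) Suc.prems(3)] c c' relpowp_Suc_I2 by metis
qed

lemma aut_d: "aut \<psi> \<Longrightarrow> u \<in> V \<Longrightarrow> w \<in> V \<Longrightarrow> d (\<psi> u) (\<psi> w) = d u w"
proof -
  assume a: "aut \<psi>" "u \<in> V" "w \<in> V"
  have "\<And>n. (E ^^ n) (\<psi> u) (\<psi> w) = (E ^^ n) u w" using aut_pow1[OF a(1,2)] aut_pow2[OF a] by blast
  thus ?thesis unfolding gdist_def by simp
qed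

lemma aut_id: "aut id" unfolding graph_aut_def by (simp add: bij_betw_id)

lemma aut_comp: assumes "aut \<phi>" "aut \<psi>" shows "aut (\<phi> \<circ> \<psi>)"
proof -
  have b: "bij_betw (\<phi> \<circ> \<psi>) V V" using assms unfolding graph_aut_def using bij_betw_trans by blast
  have "E (\<phi> (\<psi> u)) (\<phi> (\<psi> w)) = E u w" if "u \<in> V" "w \<in> V" for u w
    using aut_E[OF assms(1)] aut_E[OF assms(2)] aut_V[OF assms(2)] that by simp
  thus ?thesis using b unfolding graph_aut_def by simp
qed

end


context rg begin

lemma refl_ex: "E a b \<Longrightarrow> \<exists>\<phi>. is_reflection V E a b \<phi>"
  using rf unfolding reflective_def by blast

lemma R_all: "is_reflection V E a b \<phi> \<Longrightarrow> aut \<phi> \<and> (\<forall>v\<in>V. \<phi> (\<phi> v) = v) \<and> \<phi> a = b \<and>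
    {{u, w} | u w. u \<in> closer V E a b \<and> w \<in> closer V E b a \<and> E u w}
       = {{x', \<phi> x'} | x'. x' \<in> closer V E a b} \<and>
    (\<forall>v\<in>equidist V E a b. \<phi> v = v)"
  unfolding is_reflection_def by assumption

lemma R_p1: "is_reflection V E a b \<phi> \<Longrightarrow> aut \<phi>" by (drule R_all) (elim conjE, assumption)
lemma R_p2: "is_reflection V E a b \<phi> \<Longrightarrow> \<forall>v\<in>V. \<phi> (\<phi> v) = v" by (drule R_all) (elim conjE, assumption)
lemma R_p3: "is_reflection V E a b \<phi> \<Longrightarrow> \<phi> a = b" by (drule R_all) (elim conjE, assumption)
lemma R_p4: "is_reflection V E a b \<phi> \<Longrightarrow> {{u, w} | u w. u \<in> closer V E a b \<and> w \<in> closer V E b a \<and> E u w}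
       = {{x', \<phi> x'} | x'. x' \<in> closer V E a b}" by (drule R_all) (elim conjE, assumption)
lemma R_p5: "is_reflection V E a b \<phi> \<Longrightarrow> \<forall>v\<in>equidist V E a b. \<phi> v = v" by (drule R_all) (elim conjE, assumption)
lemmas R_parts = R_p1 R_p2 R_p3 R_p4 R_p5

lemma R_aut: "is_reflection V E a b \<phi> \<Longrightarrow> aut \<phi>" by (rule R_parts(1))
lemma R_inv: "is_reflection V E a b \<phi> \<Longrightarrow> v \<in> V \<Longrightarrow> \<phi> (\<phi> v) = v"
  using R_parts(2) by blast
lemma R_ab: "is_reflection V E a b \<phi> \<Longrightarrow> \<phi> a = b" by (rule R_parts(3))
lemma R_ba: assumes "is_reflection V E a b \<phi>" "a \<in> V" shows "\<phi> b = a"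
proof -
  have "\<phi> (\<phi> a) = a" using R_inv assms by blast
  thus ?thesis using R_ab[OF assms(1)] by simp
qed
lemma R_fix: assumes "is_reflection V E a b \<phi>" "v \<in> V" "d v a = d v b" shows "\<phi> v = v"
proof -
  have "v \<in> equidist V E a b" unfolding equidist_def using assms(2,3) by simp
  thus ?thesis using R_parts(5)[OF assms(1)] by blast
qed

lemma R_m1: assumes r: "is_reflection V E a b \<phi>" and p: "p \<in> closer V E a b"
  shows "E p (\<phi> p)"
proof -
  let ?S1 = "{{u, w} | u w. u \<in> closer V E a b \<and> w \<in> closer V E b a \<and> E u w}"
  let ?S2 = "{{x', \<phi> x'} | x'. x' \<in> closer V E a b}"
  have eq: "?S1 = ?S2" using R_parts(4)[OF r] .
  have "{p, \<phi> p} \<in> ?S2" using p by blast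
  hence "{p, \<phi> p} \<in> ?S1" using eq by simp
  then obtain u w where "{p, \<phi> p} = {u, w}" "E u w" by blast
  thus ?thesis using esym by (auto simp: doubleton_eq_iff)
qed

lemma R_m2: assumes r: "is_reflection V E a b \<phi>" and p: "p \<in> closer V E a b"
  and q: "q \<in> closer V E b a" and e: "E p q"
  shows "q = \<phi> p"
proof -
  let ?S1 = "{{u, w} | u w. u \<in> closer V E a b \<and> w \<in> closer V E b a \<and> E u w}"
  let ?S2 = "{{x', \<phi> x'} | x'. x' \<in> closer V E a b}"
  have eq: "?S1 = ?S2" using R_parts(4)[OF r] .
  have "{p, q} \<in> ?S1" using p q e by blast
  hence "{p, q} \<in> ?S2" using eq by simp
  then obtain x' where x': "{p, q} = {x', \<phi> x'}" "x' \<in> closer V E a b" by blast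
  show ?thesis
  proof (cases "p = x'")
    case True thus ?thesis using x' by (auto simp: doubleton_eq_iff)
  next
    case False
    hence "q = x'" using x' by (auto simp: doubleton_eq_iff)
    thus ?thesis using q x'(2) unfolding closer_def by auto
  qed
qed

lemma fold: assumes r: "is_reflection V E a b \<sigma>" and ab: "E a b"
  shows "p \<in> V \<Longrightarrow> q \<in> closer V E b a \<Longrightarrow> \<not> d p b < d p a \<Longrightarrow> d p (\<sigma> q) \<le> d p q"
proof (induction "d p q" arbitrary: p rule: less_induct)
  case less
  have aV: "a \<in> V" "b \<in> V" using eV ab by auto
  have qV: "q \<in> V" using less.prems(2) unfolding closer_def by blast
  have au: "aut \<sigma>" using R_aut r by blast
  show ?case
  proof (cases "d p a = d p b")
    case True
    hence "\<sigma> p = p" using R_fix r less.prems(1) by blast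
    hence "d p (\<sigma> q) = d (\<sigma> p) (\<sigma> q)" by simp
    also have "\<dots> = d p q" using aut_d au less.prems(1) qV by blast
    finally show ?thesis by simp
  next
    case False
    hence pA: "p \<in> closer V E a b" using less.prems(1,3) unfolding closer_def by auto
    have "p \<noteq> q" using pA less.prems(2) unfolding closer_def by auto
    hence "d p q \<noteq> 0" using d0 less.prems(1) qV by blast
    then obtain m where m: "d p q = Suc m" using not0_implies_Suc by blast
    obtain p1 where p1: "E p p1" "d p1 q = m" using dstep[OF less.prems(1) qV m] by blast
    have p1V: "p1 \<in> V" using eV p1(1) by blast
    show ?thesis
    proof (cases "d p1 b < d p1 a")
      case True
      hence "p1 \<in> closer V E b a" using p1V unfolding closer_def by blast
      hence "p1 = \<sigma> p" using R_m2[OF r pA _ p1(1)] by blast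
      hence "p = \<sigma> p1" using R_inv r less.prems(1) by metis
      hence "d p (\<sigma> q) = d (\<sigma> p1) (\<sigma> q)" by simp
      also have "\<dots> = m" using aut_d au p1V qV p1(2) by simp
      finally show ?thesis using m by simp
    next
      case False
      have "d p1 (\<sigma> q) \<le> d p1 q" using less.hyps[of p1] p1 m p1V less.prems(2) False by simp
      moreover have "d p (\<sigma> q) \<le> d p p1 + d p1 (\<sigma> q)"
        using tri less.prems(1) p1V aut_V au qV by blast
      ultimately show ?thesis using d1[OF p1(1)] p1(2) m by simp
    qed
  qed
qed

lemma lemU: assumes bV: "b \<in> V" and ba: "E b a" and bc: "E b c" and dac: "d a c = 2"
  shows "\<exists>u. E a u \<and> E b u \<and> E c u"
proof -
  let ?N = "{u. E b u}"
  let ?R = "\<lambda>s t. s \<in> ?N \<and> t \<in> ?N \<and> E s t"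
  have path: "?R\<^sup>*\<^sup>* a c" using lc bV ba bc unfolding locally_connected_def induced_connected_def by blast
  have cV: "c \<in> V" using eV bc by blast
  have "d s c = 2 \<longrightarrow> (\<exists>u. E s u \<and> E b u \<and> E c u)" if "?R\<^sup>*\<^sup>* s c" for s
    using that
  proof (induction rule: converse_rtranclp_induct)
    case base thus ?case by simp
  next
    case (step s s')
    show ?case
    proof
      assume ds: "d s c = 2"
      have sV: "s \<in> V" "s' \<in> V" using step.hyps(1) eV by auto
      have ss': "E s s'" "E b s" "E b s'" using step.hyps(1) by auto
      have "d s' c \<le> d s' b + d b c" using tri sV bV cV by blast
      hence le2: "d s' c \<le> 2" using d1[OF ss'(3)] d1[OF bc] dist_sym[of s' b] by simp
      consider "d s' c = 0" | "d s' c = 1" | "d s' c = 2" using le2 by linarith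
      thus "\<exists>u. E s u \<and> E b u \<and> E c u"
      proof cases
        case 1
        hence "s' = c" using d0 sV cV by blast
        hence "d s c = 1" using d1 ss'(1) by simp
        thus ?thesis using ds by simp
      next
        case 2
        hence "E s' c" using d1E sV cV by blast
        thus ?thesis using ss' esym by blast
      next
        case 3
        then obtain u' where u': "E s' u'" "E b u'" "E c u'" using step.IH by blast
        obtain \<rho> where r: "is_reflection V E s s' \<rho>" using refl_ex ss'(1) by blast
        have au: "aut \<rho>" using R_aut r .
        have rs': "\<rho> s' = s" using R_ba r sV by blast
        have "d b s = d b s'" using d1[OF ss'(2)] d1[OF ss'(3)] by simp
        hence rb: "\<rho> b = b" using R_fix[OF r bV] by blast
        have "d c s = d c s'" using ds 3 dist_sym[of c s] dist_sym[of c s'] by simp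
        hence rc: "\<rho> c = c" using R_fix[OF r cV] by blast
        have u'V: "u' \<in> V" using eV u'(1) by blast
        have "E (\<rho> s') (\<rho> u')" "E (\<rho> b) (\<rho> u')" "E (\<rho> c) (\<rho> u')"
          using aut_E[OF au] u' u'V sV bV cV by auto
        thus ?thesis using rs' rb rc by auto
      qed
    qed
  qed
  thus ?thesis using path dac by blast
qed

end


context rg begin

lemma horiz: assumes xV: "x \<in> V" and e: "E u u'" and dd: "d x u = d x u'"
  shows "\<exists>\<theta>. aut \<theta> \<and> \<theta> x = x \<and> \<theta> u = u'"
proof -
  obtain \<phi> where r: "is_reflection V E u u' \<phi>" using refl_ex e by blast
  have "\<phi> x = x" using R_fix[OF r xV] dd by blast
  thus ?thesis using R_aut[OF r] R_ab[OF r] by blast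
qed

lemma compose: "aut \<theta>1 \<and> \<theta>1 x = x \<and> \<theta>1 a = b \<Longrightarrow> aut \<theta>2 \<and> \<theta>2 x = x \<and> \<theta>2 b = c
   \<Longrightarrow> aut (\<theta>2 \<circ> \<theta>1) \<and> (\<theta>2 \<circ> \<theta>1) x = x \<and> (\<theta>2 \<circ> \<theta>1) a = c"
  using aut_comp by auto

lemma crux: assumes xV: "x \<in> V" and dz: "d x z = j" and d1': "d x y1 = Suc j" and d2: "d x y2 = Suc j"
  and e1: "E z y1" and e2: "E z y2"
  shows "\<exists>\<theta>. aut \<theta> \<and> \<theta> x = x \<and> \<theta> y1 = y2"
proof -
  have V3: "z \<in> V" "y1 \<in> V" "y2 \<in> V" using eV e1 e2 by auto
  consider "y1 = y2" | "E y1 y2" | "y1 \<noteq> y2" "\<not> E y1 y2" by blast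
  thus ?thesis
  proof cases
    case 1 thus ?thesis using aut_id by (intro exI[of _ id]) simp
  next
    case 2 thus ?thesis using horiz[OF xV 2] d1' d2 by simp
  next
    case 3
    obtain \<sigma> where r: "is_reflection V E z y1 \<sigma>" using refl_ex e1 by blast
    have au: "aut \<sigma>" using R_aut r .
    have "d y2 y1 \<noteq> 0" using d0[of y2 y1] V3 3(1) by auto
    moreover have "d y2 y1 \<noteq> 1" using d1E[of y2 y1] V3 3(2) esym by auto
    ultimately have g2: "d y2 y1 \<ge> 2" by linarith
    have dy2z: "d y2 z = 1" using d1 esym[OF e2] by blast
    have "d y2 y1 \<le> d y2 z + d z y1" using tri V3 by blast
    hence dy21: "d y2 y1 = 2" using g2 dy2z d1[OF e1] by simp
    have y2A: "y2 \<in> closer V E z y1" unfolding closer_def using V3 dy2z dy21 by simp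
    define w where "w = \<sigma> y2"
    have wV: "w \<in> V" unfolding w_def using aut_V au V3 by blast
    have e2w: "E y2 w" unfolding w_def using R_m1[OF r y2A] .
    have sz: "\<sigma> z = y1" using R_ab r .
    have sy1: "\<sigma> y1 = z" using R_ba r V3 by blast
    have e1w: "E y1 w" unfolding w_def using aut_E[OF au V3(1) V3(3)] e2 sz by simp
    have dwy1: "d w y1 = 1" unfolding w_def using aut_d[OF au V3(3) V3(1)] sz dy2z by simp
    have dwz: "d w z = 2" unfolding w_def using aut_d[OF au V3(3) V3(2)] sy1 dy21 by simp
    have wB: "w \<in> closer V E y1 z" unfolding closer_def using wV dwy1 dwz by simp
    have dzw: "d z w = 2" using dwz dist_sym[of z w] by simp
    have sw: "\<sigma> w = y2" unfolding w_def using R_inv r V3 by blast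
    have "\<not> d x y1 < d x z" using dz d1' by simp
    hence "d x (\<sigma> w) \<le> d x w" using fold[OF r e1 xV wB] by blast
    hence lo: "Suc j \<le> d x w" using sw d2 by simp
    have hi: "d x w \<le> Suc j + 1" using adj_le[OF e2w xV] d2 by simp
    consider "d x w = Suc j" | "d x w = Suc (Suc j)" using lo hi by linarith
    thus ?thesis
    proof cases
      case 1
      have q1: "d x y1 = d x w" "d x w = d x y2" using d1' d2 1 by simp_all
      obtain t1 where t1: "aut t1 \<and> t1 x = x \<and> t1 y1 = w" using horiz[OF xV e1w q1(1)] by blast
      obtain t2 where t2: "aut t2 \<and> t2 x = x \<and> t2 w = y2" using horiz[OF xV esym[OF e2w] q1(2)] by blast
      show ?thesis using compose[OF t1 t2] by blast
    next
      case 2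
      obtain u where u: "E z u" "E y1 u" "E w u" using lemU[OF V3(2) esym[OF e1] e1w dzw] by blast
      have uV: "u \<in> V" using eV u(1) by blast
      have "d x u \<le> d x z + 1" using adj_le[OF u(1) xV] .
      moreover have "d x w \<le> d x u + 1" using adj_le[OF esym[OF u(3)] xV] .
      ultimately have dxu: "d x u = Suc j" using dz 2 by simp
      have "d u z = d u y1" using d1[OF esym[OF u(1)]] d1[OF esym[OF u(2)]] by simp
      hence su: "\<sigma> u = u" using R_fix[OF r uV] by blast
      have "E (\<sigma> u) (\<sigma> w) = E u w" using aut_E[OF au uV wV] .
      hence euy2: "E u y2" using su sw esym[OF u(3)] by simp
      have q1: "d x y1 = d x u" "d x u = d x y2" using d1' d2 dxu by simp_all
      obtain t1 where t1: "aut t1 \<and> t1 x = x \<and> t1 y1 = u" using horiz[OF xV u(2) q1(1)] by blast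
      obtain t2 where t2: "aut t2 \<and> t2 x = x \<and> t2 u = y2" using horiz[OF xV euy2 q1(2)] by blast
      show ?thesis using compose[OF t1 t2] by blast
    qed
  qed
qed

lemma stab: assumes xV: "x \<in> V"
  shows "\<forall>y y'. y \<in> V \<longrightarrow> y' \<in> V \<longrightarrow> d x y = k \<longrightarrow> d x y' = k \<longrightarrow> (\<exists>\<chi>. aut \<chi> \<and> \<chi> x = x \<and> \<chi> y = y')"
proof (induction k)
  case 0
  show ?case
  proof (intro allI impI)
    fix y y' assume a: "y \<in> V" "y' \<in> V" "d x y = 0" "d x y' = 0"
    hence "y = x" "y' = x" using d0[of x y] d0[of x y'] xV by auto
    thus "\<exists>\<chi>. aut \<chi> \<and> \<chi> x = x \<and> \<chi> y = y'" using aut_id by (metis id_apply)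
  qed
next
  case (Suc j)
  show ?case
  proof (intro allI impI)
    fix y y' assume a: "y \<in> V" "y' \<in> V" "d x y = Suc j" "d x y' = Suc j"
    have "d y x = Suc j" "d y' x = Suc j" using a(3,4) dist_sym[of y x] dist_sym[of y' x] by simp_all
    then obtain z z' where z: "E y z" "d z x = j" and z': "E y' z'" "d z' x = j"
      using dstep[OF a(1) xV] dstep[OF a(2) xV] by blast
    have zV: "z \<in> V" "z' \<in> V" using eV z(1) z'(1) by auto
    have dz: "d x z = j" "d x z' = j" using z(2) z'(2) dist_sym[of z x] dist_sym[of z' x] by simp_all
    obtain \<psi> where p: "aut \<psi>" "\<psi> x = x" "\<psi> z = z'" using Suc.IH zV dz by blast
    have ez: "E z' (\<psi> y)" using aut_E[OF p(1) zV(1) a(1)] esym[OF z(1)] p(3) by simp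
    have dy: "d x (\<psi> y) = Suc j" using aut_d[OF p(1) xV a(1)] p(2) a(3) by simp
    obtain \<theta> where t: "aut \<theta>" "\<theta> x = x" "\<theta> (\<psi> y) = y'"
      using crux[OF xV dz(2) dy a(4) ez esym[OF z'(1)]] by blast
    show "\<exists>\<chi>. aut \<chi> \<and> \<chi> x = x \<and> \<chi> y = y'"
      using aut_comp[OF t(1) p(1)] t p by (metis comp_apply)
  qed
qed

lemma vtrans: assumes xV: "x \<in> V" and x'V: "x' \<in> V" shows "\<exists>\<psi>. aut \<psi> \<and> \<psi> x = x'"
proof -
  have "(\<lambda>a b. a \<in> V \<and> b \<in> V \<and> E a b)\<^sup>*\<^sup>* x x'"
    using cg xV x'V unfolding connected_graph_def induced_connected_def by blast
  thus ?thesis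
  proof (induction rule: rtranclp_induct)
    case base show ?case using aut_id by (metis id_apply)
  next
    case (step a b)
    then obtain \<psi> where p: "aut \<psi>" "\<psi> x = a" by blast
    obtain \<phi> where r: "is_reflection V E a b \<phi>" using refl_ex step(2) by blast
    show ?case using aut_comp[OF R_aut[OF r] p(1)] p(2) R_ab[OF r] by (metis comp_apply)
  qed
qed

lemma main: "distance_transitive V E"
  unfolding distance_transitive_def
proof (intro ballI impI)
  fix x y x' y' assume a: "x \<in> V" "y \<in> V" "x' \<in> V" "y' \<in> V" "d x y = d x' y'"
  obtain \<psi> where p: "aut \<psi>" "\<psi> x = x'" using vtrans a by blast
  have yV: "\<psi> y \<in> V" using aut_V p(1) a(2) by blast
  have "d x' (\<psi> y) = d x' y'" using aut_d[OF p(1) a(1) a(2)] p(2) a(5) by simp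
  then obtain \<chi> where c: "aut \<chi>" "\<chi> x' = x'" "\<chi> (\<psi> y) = y'"
    using stab[OF a(3)] yV a(4) by blast
  show "\<exists>\<psi>. graph_aut V E \<psi> \<and> \<psi> x = x' \<and> \<psi> y = y'"
    using aut_comp[OF c(1) p(1)] c p by (metis comp_apply)
qed

end

theorem lemma2p12:
  fixes V :: "'a set" and E :: "'a \<Rightarrow> 'a \<Rightarrow> bool"
  assumes "finite V" and "simple_graph V E" and "connected_graph V E"
    and "reflective V E" and "locally_connected V E"
  shows "distance_transitive V E"
proof -
  interpret rg V E using assms(2-5) by unfold_locales
  show ?thesis by (rule main)
qed

end
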